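(* For every positive integer $n$, the Bell number $\mathrm{B}_n$ satisfies \[ \mathrm{B}_n=\sum_{k=1}^n(-1)^{n-k}\Biggl[\sum_{\ell=1}^{k}L(k,\ell)\Biggr]S(n,k), \] where $L(k,\ell)$ are the Lah numbers and $S(n,k)$ are the Stirling numbers of the second kind.
   Context: The Bell numbers $\mathrm{B}_n$ ($n\ge 0$) are defined by the generating function $e^{e^x-1}=\sum_{k=0}^\infty \mathrm{B}_k\frac{x^k}{k!}$; $\mathrm{B}_n$ is the number of partitions of an $n$-element set into nonempty subsets. The Stirling numbers of the second kind are $S(n,k)=\frac1{k!}\sum_{i=0}^k(-1)^i\binom{k}{i}(k-i)^n$, equivalently the number of partitions of an $n$-element set into $k$ nonempty subsets. The Lah numbers are $L(n,k)=\binom{n-1}{k-1}\frac{n!}{k!}$ for $n\ge k\ge 1$, equivalently the number of partitions of an $n$-element set into $k$ nonempty linearly ordered subsets. *)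

theory Defs
  imports "HOL-Combinatorics.Stirling" "HOL-Library.Disjoint_Sets"
begin

definition Bell :: "nat \<Rightarrow> nat" where
  "Bell n = card {P. partition_on {..<n} P}"

text \<open>Lah numbers L(n,k) = binom(n-1,k-1) n!/k!, for n \<ge> k \<ge> 1 (exact division).\<close>
definition Lah :: "nat \<Rightarrow> nat \<Rightarrow> nat" where
  "Lah n k = ((n - 1) choose (k - 1)) * fact n div fact k"

end

theory Submission
  imports Defs
begin

lemma X1_part:
  assumes fin: "finite A" and aA: "a \<notin> A"
  shows "{P. partition_on (insert a A) P \<and> card P = Suc k \<and> {a} \<in> P}
       = insert {a} ` {P. partition_on A P \<and> card P = k}"
proof (intro equalityI subsetI)
  fix P assume "P \<in> {P. partition_on (insert a A) P \<and> card P = Suc k \<and> {a} \<in> P}"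
  hence P: "partition_on (insert a A) P" "card P = Suc k" "{a} \<in> P" by auto
  have fP: "finite P" using P(1) fin finite_elements by blast
  have dP: "x \<inter> y = {}" if "x \<in> P" "y \<in> P" "x \<noteq> y" for x y
    using P(1) that unfolding partition_on_def disjoint_def by blast
  have UP: "\<Union>P = insert a A" and eP: "{} \<notin> P" using P(1) unfolding partition_on_def by auto
  have eq: "P = insert {a} (P - {{a}})" using P(3) by auto
  have na: "a \<notin> p" if "p \<in> P" "p \<noteq> {a}" for p
    using dP[OF that(1) P(3) that(2)] by auto
  have pA: "partition_on A (P - {{a}})"
  proof (rule partition_onI)
    show "\<Union>(P - {{a}}) = A"
    proof (intro equalityI subsetI)
      fix x assume "x \<in> \<Union>(P - {{a}})"
      then obtain p where "p \<in> P" "p \<noteq> {a}" "x \<in> p" by auto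
      moreover have "a \<notin> p" using na calculation by simp
      moreover have "x \<in> insert a A" using UP calculation by auto
      ultimately show "x \<in> A" by auto
    next
      fix x assume x: "x \<in> A"
      hence "x \<in> \<Union>P" using UP by simp
      then obtain p where "p \<in> P" "x \<in> p" by auto
      moreover have "x \<noteq> a" using x aA by auto
      ultimately show "x \<in> \<Union>(P - {{a}})" by (cases "p = {a}") auto
    qed
    show "{} \<notin> P - {{a}}" using eP by simp
    fix p1 p2 assume "p1 \<in> P - {{a}}" "p2 \<in> P - {{a}}" "p1 \<noteq> p2"
    thus "disjnt p1 p2" using dP by (auto simp: disjnt_def)
  qed
  moreover have "card (P - {{a}}) = k" using P(2,3) fP by simp
  ultimately show "P \<in> insert {a} ` {P. partition_on A P \<and> card P = k}"
    using eq by blast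
next
  fix P assume "P \<in> insert {a} ` {P. partition_on A P \<and> card P = k}"
  then obtain Q where Q: "partition_on A Q" "card Q = k" and PQ: "P = insert {a} Q" by auto
  have fQ: "finite Q" using Q(1) fin finite_elements by blast
  have dQ: "x \<inter> y = {}" if "x \<in> Q" "y \<in> Q" "x \<noteq> y" for x y
    using Q(1) that unfolding partition_on_def disjoint_def by blast
  have UQ: "\<Union>Q = A" and eQ: "{} \<notin> Q" using Q(1) unfolding partition_on_def by auto
  have aU: "a \<notin> p" if "p \<in> Q" for p using UQ aA that by auto
  have "{a} \<notin> Q" using aU by auto
  hence "card P = Suc k" using PQ fQ Q(2) by simp
  moreover have "partition_on (insert a A) P"
  proof (rule partition_onI)
    show "\<Union>P = insert a A" using UQ unfolding PQ by simp
    show "{} \<notin> P" using eQ unfolding PQ by simp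
    fix p1 p2 assume p: "p1 \<in> P" "p2 \<in> P" "p1 \<noteq> p2"
    show "disjnt p1 p2"
    proof (cases "p1 = {a}")
      case True
      hence "p2 \<in> Q" using p unfolding PQ by auto
      thus ?thesis using True aU by (auto simp: disjnt_def)
    next
      case False
      hence p1: "p1 \<in> Q" using p unfolding PQ by auto
      show ?thesis
      proof (cases "p2 = {a}")
        case True
        thus ?thesis using p1 aU by (auto simp: disjnt_def)
      next
        case False
        hence "p2 \<in> Q" using p unfolding PQ by auto
        thus ?thesis using dQ p1 p(3) by (auto simp: disjnt_def)
      qed
    qed
  qed
  ultimately show "P \<in> {P. partition_on (insert a A) P \<and> card P = Suc k \<and> {a} \<in> P}"
    using PQ by auto
qed

lemma X1_card:
  assumes fin: "finite A" and aA: "a \<notin> A"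
  shows "card {P. partition_on (insert a A) P \<and> card P = Suc k \<and> {a} \<in> P}
       = card {P. partition_on A P \<and> card P = k}"
proof -
  have inj: "inj_on (insert {a}) {P. partition_on A P \<and> card P = k}"
  proof (rule inj_onI)
    fix Q1 Q2 assume q: "Q1 \<in> {P. partition_on A P \<and> card P = k}" "Q2 \<in> {P. partition_on A P \<and> card P = k}"
      and e: "insert {a} Q1 = insert {a} Q2"
    have "{a} \<notin> Q1" "{a} \<notin> Q2" using q aA unfolding partition_on_def by auto
    hence "Q1 = insert {a} Q1 - {{a}}" "Q2 = insert {a} Q2 - {{a}}" by auto
    thus "Q1 = Q2" using e by simp
  qed
  show ?thesis by (simp only: X1_part[OF assms] card_image[OF inj])
qed

lemma X2_part:
  assumes fin: "finite A" and aA: "a \<notin> A"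
  shows "{P. partition_on (insert a A) P \<and> card P = Suc k \<and> {a} \<notin> P}
       = (\<lambda>(Q,q). insert (insert a q) (Q - {q})) ` Sigma {Q. partition_on A Q \<and> card Q = Suc k} (\<lambda>Q. Q)"
    (is "?L = ?f ` ?S")
proof (intro equalityI subsetI)
  fix P assume "P \<in> ?L"
  hence P: "partition_on (insert a A) P" "card P = Suc k" "{a} \<notin> P" by auto
  have fP: "finite P" using P(1) fin finite_elements by blast
  have dP: "x \<inter> y = {}" if "x \<in> P" "y \<in> P" "x \<noteq> y" for x y
    using P(1) that unfolding partition_on_def disjoint_def by blast
  have UP: "\<Union>P = insert a A" and eP: "{} \<notin> P" using P(1) unfolding partition_on_def by auto
  have "a \<in> \<Union>P" using UP by auto
  then obtain b where b: "b \<in> P" "a \<in> b" by auto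
  have uniq: "a \<notin> p" if "p \<in> P" "p \<noteq> b" for p
    using dP[OF that(1) b(1) that(2)] b(2) by blast
  define q where "q = b - {a}"
  have bq: "b = insert a q" using b q_def by auto
  have aq: "a \<notin> q" using q_def by auto
  have qne: "q \<noteq> {}"
  proof
    assume "q = {}" hence "b = {a}" using b q_def by auto
    thus False using b P(3) by simp
  qed
  have qnP: "q \<notin> P - {b}"
  proof
    assume "q \<in> P - {b}"
    hence "q \<inter> b = {}" using dP b by blast
    thus False using qne bq by blast
  qed
  define Q where "Q = insert q (P - {b})"
  have c1: "card Q = Suc (card (P - {b}))" unfolding Q_def using qnP fP by simp
  have c2: "card (P - {b}) = k" using b P(2) fP by simp
  have cQ: "card Q = Suc k" using c1 c2 by simp
  have pQ: "partition_on A Q"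
  proof (rule partition_onI)
    have "\<Union>(P - {b}) \<subseteq> A"
    proof
      fix x assume "x \<in> \<Union>(P - {b})"
      then obtain p where "p \<in> P" "p \<noteq> b" "x \<in> p" by auto
      moreover have "a \<notin> p" using uniq calculation by simp
      moreover have "x \<in> insert a A" using UP calculation by auto
      ultimately show "x \<in> A" by auto
    qed
    moreover have "A \<subseteq> q \<union> \<Union>(P - {b})"
    proof
      fix x assume x: "x \<in> A"
      hence "x \<in> \<Union>P" using UP by simp
      then obtain p where "p \<in> P" "x \<in> p" by auto
      moreover have "x \<noteq> a" using x aA by auto
      ultimately show "x \<in> q \<union> \<Union>(P - {b})" using bq by (cases "p = b") auto
    qed
    moreover have "q \<subseteq> A"
    proof
      fix x assume x: "x \<in> q"
      hence "x \<in> \<Union>P" "x \<noteq> a" using b(1) bq aq by auto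
      thus "x \<in> A" using UP by auto
    qed
    ultimately have "q \<union> \<Union>(P - {b}) = A" by (meson equalityI Un_least)
    thus "\<Union>Q = A" unfolding Q_def by simp
    show "{} \<notin> Q" using eP qne unfolding Q_def by simp
    fix p1 p2 assume p: "p1 \<in> Q" "p2 \<in> Q" "p1 \<noteq> p2"
    show "disjnt p1 p2"
    proof (cases "p1 = q")
      case True
      hence "p2 \<in> P" "p2 \<noteq> b" using p unfolding Q_def by auto
      hence "b \<inter> p2 = {}" using dP b(1) by metis
      thus ?thesis using True bq by (auto simp: disjnt_def)
    next
      case False
      hence p1: "p1 \<in> P" "p1 \<noteq> b" using p unfolding Q_def by auto
      show ?thesis
      proof (cases "p2 = q")
        case True
        have "p1 \<inter> b = {}" using dP b(1) p1 by metis
        thus ?thesis using True bq by (auto simp: disjnt_def)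
      next
        case False
        hence "p2 \<in> P" using p unfolding Q_def by auto
        thus ?thesis using dP p1 p(3) by (auto simp: disjnt_def)
      qed
    qed
  qed
  have "q \<in> Q" unfolding Q_def by simp
  moreover have "Q - {q} = P - {b}" unfolding Q_def using qnP by auto
  hence "P = ?f (Q, q)" using b bq by auto
  ultimately show "P \<in> ?f ` ?S" using pQ cQ by auto
next
  fix P assume "P \<in> ?f ` ?S"
  then obtain Q q where Q: "partition_on A Q" "card Q = Suc k" "q \<in> Q"
    and PQ: "P = insert (insert a q) (Q - {q})" by auto
  have fQ: "finite Q" using Q(1) fin finite_elements by blast
  have dQ: "x \<inter> y = {}" if "x \<in> Q" "y \<in> Q" "x \<noteq> y" for x y
    using Q(1) that unfolding partition_on_def disjoint_def by blast
  have UQ: "\<Union>Q = A" and eQ: "{} \<notin> Q" using Q(1) unfolding partition_on_def by auto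
  have aU: "a \<notin> \<Union>Q" using UQ aA by auto
  have ni: "insert a q \<notin> Q - {q}" using aU by auto
  have "card P = Suc (card (Q - {q}))" unfolding PQ using ni fQ by simp
  also have "card (Q - {q}) = k" using Q(2,3) fQ by simp
  finally have "card P = Suc k" .
  moreover have "{a} \<notin> P"
  proof
    assume "{a} \<in> P"
    moreover have "q \<noteq> {}" "a \<notin> q" using eQ Q(3) aU by auto
    hence "{a} \<noteq> insert a q" by auto
    ultimately have "{a} \<in> Q" unfolding PQ by auto
    thus False using aU by auto
  qed
  moreover have "partition_on (insert a A) P"
  proof (rule partition_onI)
    have "\<Union>P = insert a (q \<union> \<Union>(Q - {q}))" unfolding PQ by auto
    also have "q \<union> \<Union>(Q - {q}) = \<Union>Q" using Q(3) by blast
    finally show "\<Union>P = insert a A" using UQ by simp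
    show "{} \<notin> P" using eQ unfolding PQ by auto
    fix p1 p2 assume p: "p1 \<in> P" "p2 \<in> P" "p1 \<noteq> p2"
    show "disjnt p1 p2"
    proof (cases "p1 = insert a q")
      case True
      hence "p2 \<in> Q" "p2 \<noteq> q" using p unfolding PQ by auto
      hence "q \<inter> p2 = {}" "a \<notin> p2" using dQ Q(3) aU by auto
      thus ?thesis using True by (auto simp: disjnt_def)
    next
      case False
      hence p1: "p1 \<in> Q" "p1 \<noteq> q" using p unfolding PQ by auto
      show ?thesis
      proof (cases "p2 = insert a q")
        case True
        have "p1 \<inter> q = {}" "a \<notin> p1" using dQ Q(3) p1 aU by auto
        thus ?thesis using True by (auto simp: disjnt_def)
      next
        case False
        hence "p2 \<in> Q" using p unfolding PQ by auto
        thus ?thesis using dQ p1 p(3) by (auto simp: disjnt_def)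
      qed
    qed
  qed
  ultimately show "P \<in> ?L" by auto
qed

lemma X2_card:
  assumes fin: "finite A" and aA: "a \<notin> A"
  shows "card {P. partition_on (insert a A) P \<and> card P = Suc k \<and> {a} \<notin> P}
       = Suc k * card {Q. partition_on A Q \<and> card Q = Suc k}"
proof -
  let ?f = "\<lambda>(Q,q). insert (insert a q) (Q - {q})"
  let ?S = "Sigma {Q. partition_on A Q \<and> card Q = Suc k} (\<lambda>Q. Q)"
  have inj: "inj_on ?f ?S"
  proof (rule inj_onI)
    fix x y assume x: "x \<in> ?S" and y: "y \<in> ?S" and e: "?f x = ?f y"
    obtain Q q where xq: "x = (Q,q)" by force
    obtain Q' q' where yq: "y = (Q',q')" by force
    have Q: "partition_on A Q" "q \<in> Q" using x xq by auto
    have Q': "partition_on A Q'" "q' \<in> Q'" using y yq by auto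
    have aU: "a \<notin> \<Union>Q" "a \<notin> \<Union>Q'" using Q(1) Q'(1) aA unfolding partition_on_def by auto
    have e2: "insert (insert a q) (Q - {q}) = insert (insert a q') (Q' - {q'})" using e xq yq by simp
    have "insert a q \<in> insert (insert a q') (Q' - {q'})" using e2 by blast
    hence "insert a q = insert a q'" using aU by auto
    moreover have "a \<notin> q" "a \<notin> q'" using aU Q(2) Q'(2) by auto
    ultimately have qq: "q = q'" by (metis Diff_insert_absorb)
    have "Q - {q} = insert (insert a q) (Q - {q}) - {insert a q}" using aU by auto
    also have "\<dots> = Q' - {q'}" using e2 qq aU by auto
    finally have "Q = Q'" using Q(2) Q'(2) qq by blast
    thus "x = y" using xq yq qq by simp
  qed
  have fin2: "finite {Q. partition_on A Q \<and> card Q = Suc k}"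
    using finitely_many_partition_on[OF fin] by (rule rev_finite_subset) auto
  have "card ?S = (\<Sum>Q\<in>{Q. partition_on A Q \<and> card Q = Suc k}. card Q)"
    using fin2 fin finite_elements by (subst card_SigmaI) auto
  also have "\<dots> = Suc k * card {Q. partition_on A Q \<and> card Q = Suc k}" by simp
  finally have cS: "card ?S = Suc k * card {Q. partition_on A Q \<and> card Q = Suc k}" .
  show ?thesis by (simp only: X2_part[OF assms] card_image[OF inj] cS)
qed

lemma card_Part_insert:
  assumes fin: "finite A" and aA: "a \<notin> A"
  shows "card {P. partition_on (insert a A) P \<and> card P = Suc k}
       = Suc k * card {Q. partition_on A Q \<and> card Q = Suc k} + card {P. partition_on A P \<and> card P = k}"
proof -
  have fin1: "finite {P. partition_on (insert a A) P \<and> card P = Suc k}"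
    using finitely_many_partition_on[of "insert a A"] fin by (rule_tac rev_finite_subset) auto
  have eq: "{P. partition_on (insert a A) P \<and> card P = Suc k}
     = {P. partition_on (insert a A) P \<and> card P = Suc k \<and> {a} \<in> P}
     \<union> {P. partition_on (insert a A) P \<and> card P = Suc k \<and> {a} \<notin> P}" by auto
  have "card {P. partition_on (insert a A) P \<and> card P = Suc k}
     = card {P. partition_on (insert a A) P \<and> card P = Suc k \<and> {a} \<in> P}
     + card {P. partition_on (insert a A) P \<and> card P = Suc k \<and> {a} \<notin> P}"
    by (subst eq, rule card_Un_disjoint) (use fin1 in \<open>auto intro: rev_finite_subset\<close>)
  thus ?thesis using X1_card[OF assms] X2_card[OF assms] by simp
qed

lemma card_Part_Stirling:
  "card {P. partition_on {..<n} P \<and> card P = k} = Stirling n k"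
proof (induction n arbitrary: k)
  case 0
  have e0: "{..<0::nat} = {}" by simp
  have h0: "{P. partition_on {..<0::nat} P \<and> card P = k} = (if k = 0 then {{}} else {})"
    unfolding e0 partition_on_empty by auto
  show ?case by (simp only: h0) (cases k; simp)
next
  case (Suc n)
  show ?case
  proof (cases k)
    case 0
    have h1: "{P. partition_on {..<Suc n} P \<and> card P = 0} = {}"
    proof safe
      fix P assume "partition_on {..<Suc n} P" "card P = 0"
      moreover have "finite P" using calculation finite_elements by blast
      ultimately show "P \<in> {}" unfolding partition_on_def by auto
    qed
    show ?thesis unfolding 0 h1 by simp
  next
    case (Suc k')
    have "{..<Suc n} = insert n {..<n}" by auto
    then show ?thesis using card_Part_insert[of "{..<n}" n k'] Suc.IH Suc by simp
  qed
qed

lemma card_partition_le: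
  assumes "finite A" "partition_on A P"
  shows "card P \<le> card A"
proof -
  have fin: "finite p" if "p \<in> P" for p using assms that unfolding partition_on_def
    by (meson Union_upper finite_subset)
  have "card P = (\<Sum>p\<in>P. 1)" by simp
  also have "\<dots> \<le> (\<Sum>p\<in>P. card p)"
    using assms(2) fin by (intro sum_mono) (auto simp: partition_on_def card_gt_0_iff Suc_le_eq)
  also have "\<dots> = card A" using product_partition[OF assms(2) fin] by simp
  finally show ?thesis .
qed

lemma Bell_Stirling: "Bell n = (\<Sum>k\<le>n. Stirling n k)"
proof -
  have eq: "{P. partition_on {..<n} P} = (\<Union>k\<in>{..n}. {P. partition_on {..<n} P \<and> card P = k})"
    using card_partition_le[of "{..<n}"] by auto
  have "Bell n = (\<Sum>k\<le>n. card {P. partition_on {..<n} P \<and> card P = k})"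
    unfolding Bell_def eq
  proof (rule card_UN_disjoint)
    show "finite {..n}" by simp
    show "\<forall>k\<in>{..n}. finite {P. partition_on {..<n} P \<and> card P = k}"
      using finitely_many_partition_on[of "{..<n}"] by (auto intro: rev_finite_subset)
    show "\<forall>i\<in>{..n}. \<forall>j\<in>{..n}. i \<noteq> j \<longrightarrow> {P. partition_on {..<n} P \<and> card P = i} \<inter> {P. partition_on {..<n} P \<and> card P = j} = {}"
      by blast
  qed
  thus ?thesis by (simp add: card_Part_Stirling)
qed

fun Lp :: "nat \<Rightarrow> nat \<Rightarrow> nat" where
  "Lp 0 0 = 1"
| "Lp 0 (Suc l) = 0"
| "Lp (Suc k) 0 = 0"
| "Lp (Suc k) (Suc l) = (k + Suc l) * Lp k (Suc l) + Lp k l"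

lemma Lp_less: "k < l \<Longrightarrow> Lp k l = 0"
proof (induction k arbitrary: l)
  case 0 thus ?case by (cases l) auto
next
  case (Suc k) thus ?case by (cases l) auto
qed

lemma binom_key: "Suc m * (j choose Suc m) = (j - m) * (j choose m)"
  using binomial_absorption[of m j] binomial_absorb_comp[of j m] by simp

lemma binom_key2:
  "(Suc j + Suc (Suc m)) * (j choose Suc m) + Suc (Suc m) * (j choose m)
     = (Suc (Suc j)) * (Suc j choose Suc m)"
proof (cases "m \<le> j")
  case True
  have k: "Suc m * (j choose Suc m) = (j - m) * (j choose m)" by (rule binom_key)
  have e: "(j - m) + Suc (Suc m) = Suc (Suc j)" using True by simp
  have "(Suc j + Suc (Suc m)) * (j choose Suc m) + Suc (Suc m) * (j choose m)
      = Suc (Suc j) * (j choose Suc m) + Suc m * (j choose Suc m) + Suc (Suc m) * (j choose m)"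
    by (simp add: algebra_simps)
  also have "\<dots> = Suc (Suc j) * (j choose Suc m) + ((j - m) * (j choose m) + Suc (Suc m) * (j choose m))"
    unfolding k by (simp only: add.assoc)
  also have "\<dots> = Suc (Suc j) * (j choose Suc m) + ((j - m) + Suc (Suc m)) * (j choose m)"
    by (simp only: add_mult_distrib)
  also have "\<dots> = Suc (Suc j) * ((j choose Suc m) + (j choose m))" unfolding e by (simp only: add_mult_distrib2)
  also have "\<dots> = Suc (Suc j) * (Suc j choose Suc m)" by simp
  finally show ?thesis .
next
  case False
  hence z: "j choose m = 0" "j choose Suc m = 0" "Suc j choose Suc m = 0" by simp_all
  show ?thesis unfolding z by simp
qed

lemma Lp_closed: "Lp (Suc j) (Suc m) * fact (Suc m) = (j choose m) * fact (Suc j)"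
proof (induction j arbitrary: m)
  case 0
  then show ?case by (cases m) auto
next
  case (Suc j)
  show ?case
  proof (cases m)
    case 0
    have "Lp (Suc j) (Suc 0) = fact (Suc j)" using Suc.IH[of 0] by simp
    then show ?thesis using 0 by (simp add: algebra_simps)
  next
    case (Suc m')
    have i1: "Lp (Suc j) (Suc m) * fact (Suc m) = (j choose m) * fact (Suc j)" by (rule Suc.IH)
    have i2: "Lp (Suc j) (Suc m') * fact (Suc m') = (j choose m') * fact (Suc j)" by (rule Suc.IH)
    have "Lp (Suc (Suc j)) (Suc m) * fact (Suc m)
        = (Suc j + Suc m) * (Lp (Suc j) (Suc m) * fact (Suc m)) + Suc m * (Lp (Suc j) m * fact m)"
      by (simp add: algebra_simps)
    also have "\<dots> = ((Suc j + Suc m) * (j choose m) + Suc m * (j choose m')) * fact (Suc j)"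
      unfolding i1 using i2 Suc by (simp add: algebra_simps)
    also have "(Suc j + Suc m) * (j choose m) + Suc m * (j choose m') = Suc (Suc j) * (Suc j choose m)"
      using binom_key2[of j m'] Suc by simp
    finally show ?thesis by (simp add: algebra_simps)
  qed
qed

lemma Lah_Lp: "k \<ge> 1 \<Longrightarrow> l \<ge> 1 \<Longrightarrow> Lah k l = Lp k l"
proof -
  assume "k \<ge> 1" "l \<ge> 1"
  then obtain j m where jm: "k = Suc j" "l = Suc m" by (metis Suc_le_D One_nat_def)
  have "Lah k l = (j choose m) * fact (Suc j) div fact (Suc m)" unfolding Lah_def jm by simp
  also have "\<dots> = Lp k l * fact (Suc m) div fact (Suc m)" unfolding jm Lp_closed ..
  also have "\<dots> = Lp k l" by simp
  finally show ?thesis .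
qed

lemma T_identity:
  "(\<Sum>k\<le>n. (-1::int)^(n-k) * int (Stirling n k) * int (Lp k l)) = int (Stirling n l)"
proof (induction n arbitrary: l)
  case 0
  then show ?case by (cases l) auto
next
  case (Suc n)
  define T where "T l = (\<Sum>k\<le>n. (-1::int)^(n-k) * int (Stirling n k) * int (Lp k l))" for l
  have IH: "T l = int (Stirling n l)" for l unfolding T_def by (rule Suc.IH)
  have shift: "(\<Sum>k\<le>Suc n. (-1::int)^(Suc n-k) * int (Stirling (Suc n) k) * int (Lp k l))
      = (\<Sum>k\<le>n. (-1::int)^(n-k) * (int (Suc k) * int (Stirling n (Suc k)) + int (Stirling n k)) * int (Lp (Suc k) l))"
    by (subst sum.atMost_Suc_shift) (simp add: algebra_simps)
  show ?case
  proof (cases l)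
    case 0
    then show ?thesis unfolding shift by simp
  next
    case (Suc m)
    define g where "g k = (-1::int)^(Suc n - k) * int k * int (Stirling n k) * int (Lp k l)" for k
    have "(\<Sum>k\<le>Suc n. g k) = g 0 + (\<Sum>k\<le>n. g (Suc k))" by (rule sum.atMost_Suc_shift)
    also have "\<dots> = (\<Sum>k\<le>n. (-1::int)^(n-k) * int (Suc k) * int (Stirling n (Suc k)) * int (Lp (Suc k) l))"
      unfolding g_def by simp
    finally have F1: "(\<Sum>k\<le>n. (-1::int)^(n-k) * int (Suc k) * int (Stirling n (Suc k)) * int (Lp (Suc k) l))
        = (\<Sum>k\<le>Suc n. g k)" ..
    have "(\<Sum>k\<le>Suc n. g k) = (\<Sum>k\<le>n. g k) + g (Suc n)" by simp
    also have "g (Suc n) = 0" unfolding g_def by simp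
    also have "(\<Sum>k\<le>n. g k) = (\<Sum>k\<le>n. - ((-1::int)^(n-k) * int k * int (Stirling n k) * int (Lp k l)))"
      by (rule sum.cong) (auto simp: g_def Suc_diff_le)
    finally have F: "(\<Sum>k\<le>n. (-1::int)^(n-k) * int (Suc k) * int (Stirling n (Suc k)) * int (Lp (Suc k) l))
        = - (\<Sum>k\<le>n. (-1::int)^(n-k) * int k * int (Stirling n k) * int (Lp k l))"
      using F1 by (simp add: sum_negf)
    have "(\<Sum>k\<le>n. (-1::int)^(n-k) * (int (Suc k) * int (Stirling n (Suc k)) + int (Stirling n k)) * int (Lp (Suc k) l))
        = (\<Sum>k\<le>n. (-1::int)^(n-k) * int (Suc k) * int (Stirling n (Suc k)) * int (Lp (Suc k) l))
          + (\<Sum>k\<le>n. (-1::int)^(n-k) * int (Stirling n k) * (int (k + l) * int (Lp k l) + int (Lp k m)))"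
      unfolding sum.distrib[symmetric] Suc by (rule sum.cong) (simp_all add: algebra_simps)
    also have "\<dots> = (\<Sum>k\<le>n. (-1::int)^(n-k) * int (Stirling n k) * (int l * int (Lp k l) + int (Lp k m)))"
      unfolding F sum_negf[symmetric] sum.distrib[symmetric] by (rule sum.cong) (simp_all add: algebra_simps)
    also have "\<dots> = int l * T l + T m"
      unfolding T_def sum_distrib_left sum.distrib[symmetric] by (rule sum.cong) (simp_all add: algebra_simps)
    also have "\<dots> = int (Stirling (Suc n) l)" unfolding IH Suc by (simp add: algebra_simps)
    finally show ?thesis unfolding shift .
  qed
qed

theorem theorem1:
  fixes n :: nat
  assumes "n \<ge> 1"
  shows "int (Bell n) =
    (\<Sum>k=1..n. (-1) ^ (n - k) * int (\<Sum>l=1..k. Lah k l) * int (Stirling n k))"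
proof -
  have inner: "int (\<Sum>l=1..k. Lah k l) = (\<Sum>l=1..n. int (Lp k l))" if k: "k \<in> {1..n}" for k
  proof -
    have "(\<Sum>l=1..k. Lah k l) = (\<Sum>l=1..k. Lp k l)"
      using k by (intro sum.cong) (auto simp: Lah_Lp)
    also have "\<dots> = (\<Sum>l=1..n. Lp k l)"
      using k by (intro sum.mono_neutral_left) (auto simp: Lp_less)
    finally show ?thesis by simp
  qed
  have "(\<Sum>k=1..n. (-1) ^ (n - k) * int (\<Sum>l=1..k. Lah k l) * int (Stirling n k))
      = (\<Sum>k=1..n. \<Sum>l=1..n. (-1::int) ^ (n - k) * int (Stirling n k) * int (Lp k l))"
  proof (rule sum.cong[OF refl])
    fix k assume k: "k \<in> {1..n}"
    show "(-1) ^ (n - k) * int (\<Sum>l=1..k. Lah k l) * int (Stirling n k)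
        = (\<Sum>l=1..n. (-1::int) ^ (n - k) * int (Stirling n k) * int (Lp k l))"
      unfolding inner[OF k] by (simp add: sum_distrib_left sum_distrib_right algebra_simps)
  qed
  also have "\<dots> = (\<Sum>l=1..n. \<Sum>k=1..n. (-1::int) ^ (n - k) * int (Stirling n k) * int (Lp k l))"
    by (rule sum.swap)
  also have "\<dots> = (\<Sum>l=1..n. \<Sum>k\<le>n. (-1::int) ^ (n - k) * int (Stirling n k) * int (Lp k l))"
  proof (rule sum.cong)
    fix l
    have "{..n} = insert 0 {1..n}" by auto
    moreover have "Stirling n 0 = 0" using assms by (cases n) auto
    ultimately show "(\<Sum>k=1..n. (-1::int) ^ (n - k) * int (Stirling n k) * int (Lp k l))
        = (\<Sum>k\<le>n. (-1::int) ^ (n - k) * int (Stirling n k) * int (Lp k l))" by simp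
  qed simp
  also have "\<dots> = (\<Sum>l=1..n. int (Stirling n l))" by (simp add: T_identity)
  also have "\<dots> = (\<Sum>l\<le>n. int (Stirling n l))"
  proof -
    have "{..n} = insert 0 {1..n}" by auto
    moreover have "Stirling n 0 = 0" using assms by (cases n) auto
    ultimately show ?thesis by simp
  qed
  also have "\<dots> = int (Bell n)" by (simp add: Bell_Stirling)
  finally show ?thesis ..
qed

end
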